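(* Let $(Z_i)_{i\ge1}$ be i.i.d. real random variables with $P(Z_1>x)\sim c\,e^{-\alpha x}$ as $x\to\infty$, for constants $c,\alpha>0$. Then there exists $\delta>0$, depending only on the law of $Z_1$, such that for every countable family $(x_i)$ of real numbers for which $Y:=\sup_i(x_i+Z_i)<\infty$ a.s., one has $\mathrm{conc}(\mathrm{dist}(Y),\delta)\le1-\delta$.
   Context: For a random variable $Y$ and $\delta>0$, $\mathrm{conc}(\mathrm{dist}(Y),\delta)=\sup_{a\in\mathbb R}P(a\le Y\le a+\delta)$. *)

theory Defs
  imports "HOL-Probability.Probability" "HOL-Library.Landau_Symbols"
begin

definition conc :: "real measure \<Rightarrow> real \<Rightarrow> real" where
  "conc mu d = (SUP a::real. measure mu {a..a + d})"

end

theory Submission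
  imports Defs
begin

lemma (in prob_space) main_bound:
  fixes Z :: "nat \<Rightarrow> 'a \<Rightarrow> real" and Fb :: "real \<Rightarrow> real" and x :: "nat \<Rightarrow> real"
  assumes Zm: "\<And>i. Z i \<in> borel_measurable M"
    and ind: "indep_vars (\<lambda>_. borel) Z UNIV"
    and Fb: "\<And>i t. prob {\<omega>\<in>space M. Z i \<omega> > t} = Fb t"
    and I: "I \<noteq> {}"
    and fin: "AE \<omega> in M. (SUP i\<in>I. ereal (x i + Z i \<omega>)) < \<infinity>"
    and d: "0 < \<delta>" "\<delta> \<le> 1/2" "\<delta> \<le> Fb T" "exp (-1/(2*K)) \<le> 1 - \<delta>" "K > 0"
    and KT: "\<And>t. t \<ge> T \<Longrightarrow> Fb (t-1-\<delta>) \<le> K * Fb t"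
  shows "prob {\<omega>\<in>space M. real_of_ereal (SUP i\<in>I. ereal (x i + Z i \<omega>)) \<in> {a..a+\<delta>}} \<le> 1 - \<delta>"
proof -
  define Y where "Y \<omega> = (SUP i\<in>I. ereal (x i + Z i \<omega>))" for \<omega>
  have cI: "countable I" by simp
  have Zm': "\<And>i. Z i \<in> borel_measurable M" by (rule Zm)
  have Ymeas: "Y \<in> borel_measurable M"
    unfolding Y_def using cI Zm' by measurable
  define S where "S = {\<omega>\<in>space M. real_of_ereal (Y \<omega>) \<in> {a..a+\<delta>}}"
  have ev: "{\<omega>\<in>space M. Z i \<omega> > t} \<in> events" for i t using Zm' by measurable
  have ev2: "{\<omega>\<in>space M. Z i \<omega> \<le> t} \<in> events" for i t using Zm' by measurable
  have Fmono: "Fb t \<le> Fb s" if "s \<le> t" for s t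
  proof -
    have "prob {\<omega>\<in>space M. Z 0 \<omega> > t} \<le> prob {\<omega>\<in>space M. Z 0 \<omega> > s}"
      using that by (intro finite_measure_mono ev) auto
    then show ?thesis using Fb by simp
  qed
  have F01: "0 \<le> Fb t" "Fb t \<le> 1" for t
  proof -
    have "prob {\<omega>\<in>space M. Z 0 \<omega> > t} = Fb t" by (rule Fb)
    then show "0 \<le> Fb t" "Fb t \<le> 1" by (metis measure_nonneg, metis prob_le_1)
  qed
  have Fle: "prob {\<omega>\<in>space M. Z i \<omega> \<le> t} = 1 - Fb t" for i t
  proof -
    have "{\<omega>\<in>space M. Z i \<omega> \<le> t} = space M - {\<omega>\<in>space M. Z i \<omega> > t}" by auto
    moreover have "{\<omega>\<in>space M. Z i \<omega> > t} \<in> events" by (rule ev)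
    ultimately show ?thesis using prob_compl Fb by simp
  qed
  have Ylow: "ereal (x i + Z i \<omega>) \<le> Y \<omega>" if "i \<in> I" for i \<omega>
    unfolding Y_def using that by (rule SUP_upper)
  show ?thesis
  proof (cases "\<forall>J. finite J \<and> J \<subseteq> I \<longrightarrow> (\<Sum>i\<in>J. Fb (a-1-x i)) \<le> 1-\<delta>")
    case True
    define B where "B i = (if i \<in> I then {\<omega>\<in>space M. Z i \<omega> > a-1-x i} else {})" for i
    have Bev: "range B \<subseteq> events" using ev by (auto simp: B_def)
    have pB: "prob (B i) = (if i \<in> I then Fb (a-1-x i) else 0)" for i
      using Fb by (simp add: B_def)
    have part: "(\<Sum>i<n. prob (B i)) \<le> 1 - \<delta>" for n
    proof -
      have "(\<Sum>i<n. prob (B i)) = (\<Sum>i\<in>{..<n} \<inter> I. Fb (a-1-x i))"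
        by (simp add: pB sum.inter_restrict)
      also have "\<dots> \<le> 1 - \<delta>" using True by auto
      finally show ?thesis .
    qed
    have summ: "summable (\<lambda>i. prob (B i))"
      by (rule summableI_nonneg_bounded[where x="1-\<delta>"]) (use part in auto)
    have "prob (\<Union>i. B i) \<le> (\<Sum>i. prob (B i))"
      by (rule finite_measure_subadditive_countably[OF Bev summ])
    also have "\<dots> \<le> 1 - \<delta>" by (rule suminf_le_const[OF summ part])
    finally have U: "prob (\<Union>i. B i) \<le> 1 - \<delta>" .
    have sub: "S \<subseteq> (\<Union>i. B i)"
    proof
      fix \<omega> assume w: "\<omega> \<in> S"
      show "\<omega> \<in> (\<Union>i. B i)"
      proof (rule ccontr)
        assume "\<omega> \<notin> (\<Union>i. B i)"
        then have all: "\<forall>i\<in>I. x i + Z i \<omega> \<le> a - 1" using w by (auto simp: B_def S_def)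
        have up: "Y \<omega> \<le> ereal (a-1)" unfolding Y_def using all by (auto intro!: SUP_least)
        obtain i0 where "i0 \<in> I" using I by auto
        from Ylow[OF this, of \<omega>] have low: "ereal (x i0 + Z i0 \<omega>) \<le> Y \<omega>" .
        have "real_of_ereal (Y \<omega>) \<le> a - 1"
          using up low by (cases "Y \<omega>") auto
        then show False using w by (auto simp: S_def)
      qed
    qed
    have "prob S \<le> prob (\<Union>i. B i)"
      using sub Bev by (intro finite_measure_mono) auto
    then show ?thesis using U by (simp add: S_def Y_def)
  next
    case False
    then obtain J where J: "finite J" "J \<subseteq> I" and Jsum: "(\<Sum>i\<in>J. Fb (a-1-x i)) > 1-\<delta>"
      by auto
    have Jne: "J \<noteq> {}" using Jsum d by auto
    define t where "t i = a + \<delta> - x i" for i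
    define A where "A i = {\<omega>\<in>space M. Z i \<omega> \<le> t i}" for i
    have indS: "indep_sets (\<lambda>i. sigma_sets (space M) {Z i -` A \<inter> space M | A. A \<in> sets borel}) UNIV"
      using ind unfolding indep_vars_def by simp
    have AinF: "A i \<in> sigma_sets (space M) {Z i -` A \<inter> space M | A. A \<in> sets borel}" for i
    proof (rule sigma_sets.Basic)
      have "A i = Z i -` {..t i} \<inter> space M" by (auto simp: A_def)
      then show "A i \<in> {Z i -` A \<inter> space M | A. A \<in> sets borel}"
        by (intro CollectI exI[of _ "{..t i}"]) simp
    qed
    have PE: "prob (\<Inter>i\<in>J. A i) = (\<Prod>i\<in>J. 1 - Fb (t i))"
    proof -
      have "prob (\<Inter>i\<in>J. A i) = (\<Prod>i\<in>J. prob (A i))"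
        using AinF by (intro indep_setsD[OF indS _ Jne J(1)]) auto
      also have "\<dots> = (\<Prod>i\<in>J. 1 - Fb (t i))"
        unfolding A_def using Fle by simp
      finally show ?thesis .
    qed
    have Aev: "(\<Inter>i\<in>J. A i) \<in> events" using Jne J(1) ev2 by (auto simp: A_def)
    have "AE \<omega> in M. \<omega> \<in> S \<longrightarrow> \<omega> \<in> (\<Inter>i\<in>J. A i)"
      using fin
    proof (rule AE_mp, intro AE_I2 impI)
      fix \<omega> assume w: "\<omega> \<in> space M" and fY: "(SUP i\<in>I. ereal (x i + Z i \<omega>)) < \<infinity>" and s: "\<omega> \<in> S"
      obtain i0 where "i0 \<in> I" using I by auto
      from Ylow[OF this, of \<omega>] have low: "ereal (x i0 + Z i0 \<omega>) \<le> Y \<omega>" .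
      have eq: "Y \<omega> = ereal (real_of_ereal (Y \<omega>))"
        using low fY by (cases "Y \<omega>") (auto simp: Y_def)
      have "Y \<omega> \<le> ereal (a + \<delta>)" using s eq by (auto simp: S_def) (metis ereal_less_eq(3))
      then have "x i + Z i \<omega> \<le> a + \<delta>" if "i \<in> J" for i
        using Ylow[of i \<omega>] that J(2) by (metis ereal_less_eq(3) order.trans subsetD)
      then show "\<omega> \<in> (\<Inter>i\<in>J. A i)"
        using w by (auto simp: A_def t_def) (smt (verit))
    qed
    then have "prob S \<le> prob (\<Inter>i\<in>J. A i)"
      by (rule finite_measure_mono_AE[OF _ Aev])
    also have "\<dots> \<le> 1 - \<delta>"
    proof (cases "\<exists>i\<in>J. t i < T")
      case True
      then obtain i where i: "i \<in> J" "t i < T" by auto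
      have "(\<Prod>i\<in>J. 1 - Fb (t i)) = (1 - Fb (t i)) * (\<Prod>j\<in>J-{i}. 1 - Fb (t j))"
        using i J by (simp add: prod.remove)
      also have "\<dots> \<le> (1 - Fb (t i)) * 1"
        using F01 by (intro mult_left_mono prod_le_1) auto
      also have "\<dots> \<le> 1 - \<delta>" using Fmono[of "t i" T] i d by simp
      finally show ?thesis using PE by simp
    next
      case False
      then have tT: "\<And>i. i \<in> J \<Longrightarrow> t i \<ge> T" by force
      have "1 - \<delta> < (\<Sum>i\<in>J. Fb (a-1-x i))" by (rule Jsum)
      also have "\<dots> \<le> (\<Sum>i\<in>J. K * Fb (t i))"
      proof (rule sum_mono)
        fix i assume "i \<in> J"
        have "t i - 1 - \<delta> = a - 1 - x i" by (simp add: t_def)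
        with KT[OF tT[OF \<open>i \<in> J\<close>]] show "Fb (a - 1 - x i) \<le> K * Fb (t i)"
          by simp
      qed
      finally have "1 - \<delta> < K * (\<Sum>i\<in>J. Fb (t i))" by (simp add: sum_distrib_left)
      then have "1/2 < K * (\<Sum>i\<in>J. Fb (t i))" using d by simp
      then have sb: "1/(2*K) \<le> (\<Sum>i\<in>J. Fb (t i))" using d
        by (simp add: field_simps)
      have "(\<Prod>i\<in>J. 1 - Fb (t i)) \<le> (\<Prod>i\<in>J. exp (- Fb (t i)))"
        using F01 by (intro prod_mono) (auto simp: exp_ge_add_one_self[of "- Fb _", simplified]
            intro: order.trans[OF _ exp_ge_add_one_self])
      also have "\<dots> = exp (- (\<Sum>i\<in>J. Fb (t i)))"
        using exp_sum[OF J(1), of "\<lambda>i. - Fb (t i)"] by (simp add: sum_negf)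
      also have "\<dots> \<le> exp (-1/(2*K))" using sb by simp
      also have "\<dots> \<le> 1 - \<delta>" by (rule d)
      finally show ?thesis using PE by simp
    qed
    finally show ?thesis by (simp add: S_def Y_def)
  qed
qed

theorem lemma27:
  fixes M :: "'a measure" and Z :: "nat \<Rightarrow> 'a \<Rightarrow> real" and c \<alpha> :: real
  assumes "prob_space M"
    and "\<And>i. Z i \<in> borel_measurable M"
    and "prob_space.indep_vars M (\<lambda>_. borel) Z UNIV"
    and "\<And>i. distr M borel (Z i) = distr M borel (Z 0)"
    and "c > 0" and "\<alpha> > 0"
    and "(\<lambda>x. measure M {\<omega> \<in> space M. Z 0 \<omega> > x}) \<sim>[at_top] (\<lambda>x. c * exp (- \<alpha> * x))"
  shows "\<exists>\<delta>>0. \<forall>(I :: nat set) (x :: nat \<Rightarrow> real).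
           I \<noteq> {} \<longrightarrow>
           (AE \<omega> in M. (SUP i\<in>I. ereal (x i + Z i \<omega>)) < \<infinity>) \<longrightarrow>
           conc (distr M borel (\<lambda>\<omega>. real_of_ereal (SUP i\<in>I. ereal (x i + Z i \<omega>)))) \<delta> \<le> 1 - \<delta>"
proof -
  interpret P: prob_space M by (rule assms(1))
  note Zm = assms(2)
  define Fb where "Fb t = measure M {\<omega> \<in> space M. Z 0 \<omega> > t}" for t
  define g where "g x = c * exp (- \<alpha> * x)" for x
  have Fb: "measure M {\<omega>\<in>space M. Z i \<omega> > t} = Fb t" for i t
  proof -
    have "measure M {\<omega>\<in>space M. Z i \<omega> > t} = measure (distr M borel (Z i)) {t<..}"
      using Zm by (subst measure_distr) (auto intro!: arg_cong[where f="measure M"])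
    also have "\<dots> = measure (distr M borel (Z 0)) {t<..}" by (simp add: assms(4)[of i])
    also have "\<dots> = Fb t"
      using Zm unfolding Fb_def by (subst measure_distr) (auto intro!: arg_cong[where f="measure M"])
    finally show ?thesis .
  qed
  have gpos: "g x > 0" for x using assms(5) by (simp add: g_def)
  have "((\<lambda>x. Fb x / g x) \<longlongrightarrow> 1) at_top"
    using assms(7) unfolding Fb_def[symmetric] g_def[symmetric]
  proof (rule asymp_equivD_strong)
    show "\<forall>\<^sub>F x in at_top. Fb x \<noteq> 0 \<or> g x \<noteq> 0"
      by (intro always_eventually allI disjI2) (metis gpos less_irrefl)
  qed
  then have "eventually (\<lambda>x. 1/2 < Fb x / g x) at_top" "eventually (\<lambda>x. Fb x / g x < 2) at_top"
    by (auto intro: order_tendstoD simp del: divide_const_simps)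
  then have "eventually (\<lambda>x. 1/2 < Fb x / g x \<and> Fb x / g x < 2) at_top"
    by (rule eventually_conj)
  then obtain T0 where T0: "\<And>x. x \<ge> T0 \<Longrightarrow> 1/2 < Fb x / g x \<and> Fb x / g x < 2"
    by (auto simp: eventually_at_top_linorder)
  have lowb: "g x / 2 < Fb x" and upb: "Fb x < 2 * g x" if "x \<ge> T0" for x
    using T0[OF that] gpos[of x] by (auto simp: field_simps)
  define K where "K = 4 * exp (2 * \<alpha>)"
  define T where "T = T0 + 2"
  define \<delta> where "\<delta> = min (1/2) (min (Fb T) (1 - exp (-1/(2*K))))"
  have Kpos: "K > 0" by (simp add: K_def)
  have FT: "Fb T > 0" using lowb[of T] gpos[of T] by (simp add: T_def)
  have "exp (-1/(2*K)) < 1" using Kpos by simp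
  then have dpos: "\<delta> > 0" using FT by (simp add: \<delta>_def)
  have d2: "\<delta> \<le> 1/2" "\<delta> \<le> Fb T" "exp (-1/(2*K)) \<le> 1 - \<delta>"
    unfolding \<delta>_def
    by (rule min.cobounded1, rule order.trans[OF min.cobounded2 min.cobounded1],
        smt (verit, best) min.cobounded2 min.coboundedI2)
  have KT: "Fb (t-1-\<delta>) \<le> K * Fb t" if "t \<ge> T" for t
  proof -
    have "Fb (t-1-\<delta>) \<le> 2 * g (t-1-\<delta>)" using upb[of "t-1-\<delta>"] that d2 by (simp add: T_def)
    also have "\<dots> = 2 * g t * exp (\<alpha> * (1 + \<delta>))"
      by (simp add: g_def mult_exp_exp algebra_simps)
    also have "\<dots> \<le> 2 * g t * exp (2 * \<alpha>)"
      using d2 assms(6) gpos[of t] by (intro mult_left_mono) auto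
    also have "\<dots> \<le> 4 * Fb t * exp (2 * \<alpha>)"
      using lowb[of t] that by (intro mult_right_mono) (auto simp: T_def)
    finally show ?thesis by (simp add: K_def mult_ac)
  qed
  show ?thesis
  proof (intro exI[of _ \<delta>] conjI allI impI dpos)
    fix I :: "nat set" and x :: "nat \<Rightarrow> real"
    assume I: "I \<noteq> {}" and fin: "AE \<omega> in M. (SUP i\<in>I. ereal (x i + Z i \<omega>)) < \<infinity>"
    define Yr where "Yr \<omega> = real_of_ereal (SUP i\<in>I. ereal (x i + Z i \<omega>))" for \<omega>
    have cI: "countable I" by simp
    have Yrm: "Yr \<in> borel_measurable M" unfolding Yr_def using cI Zm by measurable
    have "measure (distr M borel Yr) {a..a+\<delta>} \<le> 1 - \<delta>" for a
    proof -
      have "measure (distr M borel Yr) {a..a+\<delta>} = measure M {\<omega>\<in>space M. Yr \<omega> \<in> {a..a+\<delta>}}"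
        using Yrm by (subst measure_distr) (auto intro!: arg_cong[where f="measure M"])
      also have "\<dots> \<le> 1 - \<delta>" unfolding Yr_def
        by (rule P.main_bound[OF Zm assms(3) Fb I fin dpos d2 Kpos KT])
      finally show ?thesis .
    qed
    then show "conc (distr M borel (\<lambda>\<omega>. real_of_ereal (SUP i\<in>I. ereal (x i + Z i \<omega>)))) \<delta> \<le> 1 - \<delta>"
      unfolding conc_def Yr_def[symmetric] by (intro cSUP_least) auto
  qed
qed

end
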